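(* Let $A$ be a finite-dimensional real associative algebra with unit $u$, and let $\{\cdot,\cdot\}$ be a quadratic Poisson bracket on $A$ compatible with its multiplication, with dual map $\delta\colon\mathrm{Symm}(A\otimes A)\to A\wedge A$. Then the group $A^\times$ of invertible elements of $A$ (an open subset of $A$), equipped with the restriction of this bracket, is a Poisson Lie group, and its tangent Lie bialgebra is $A_L$ with cocommutator $\Delta(x)=\delta(x\otimes u+u\otimes x)$.
   Context: $A_L$ is the Lie algebra on $A$ with bracket $[a,b]=ab-ba$ (the Lie algebra of $A^\times$). A quadratic Poisson bracket on $A$ is a Poisson bracket on $C^\infty(A)$ such that the bracket of two linear functions (elements of $A^*$) is a homogeneous quadratic function; it is encoded by $\delta^*(\xi\wedge\eta)=\{\xi,\eta\}\in\mathrm{Sym}^2(A^* )$, and $\delta$ is the dual map, with $\mathrm{Symm}(A\otimes A)$ (symmetric tensors) identified with $(\mathrm{Sym}^2A^* )^*$ and $A\wedge A$ (skew-symmetric tensors) with $(A^*\wedge A^* )^*$. Compatibility with the multiplication means that the multiplication map $A\times A\to A$ is a Poisson map when $A\times A$ carries the product Poisson structure. A Poisson Lie group is a Lie group with a Poisson bracket such that the group multiplication $G\times G\to G$ is a Poisson map; its tangent Lie bialgebra is the Lie algebra with cocommutator given by the linearization of the Poisson tensor at the identity. *)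

theory Defs
  imports "HOL-Analysis.Analysis"
begin

fun iter_dd :: "'a::real_normed_vector list \<Rightarrow> ('a \<Rightarrow> 'b::real_normed_vector) \<Rightarrow> 'a \<Rightarrow> 'b" where
  "iter_dd [] f = f"
| "iter_dd (v # vs) f =
     (\<lambda>x. Lim (at (0::real)) (\<lambda>t. (iter_dd vs f (x + t *\<^sub>R v) - iter_dd vs f x) /\<^sub>R t))"

definition smooth_on :: "'a::real_normed_vector set \<Rightarrow> ('a \<Rightarrow> 'b::real_normed_vector) \<Rightarrow> bool" where
  "smooth_on S f \<longleftrightarrow> open S
     \<and> (\<forall>vs. continuous_on S (iter_dd vs f))
     \<and> (\<forall>vs v. \<forall>x\<in>S. ((\<lambda>t::real. (iter_dd vs f (x + t *\<^sub>R v) - iter_dd vs f x) /\<^sub>R t)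
                          \<longlongrightarrow> iter_dd (v # vs) f x) (at 0))"

text \<open>A bivector field on (an open subset of) a finite-dimensional real vector space V:
  at each point a, P a is a skew bilinear form on covectors (linear functionals V \<Rightarrow> real).\<close>
type_synonym 'a bivector_field = "'a \<Rightarrow> ('a \<Rightarrow> real) \<Rightarrow> ('a \<Rightarrow> real) \<Rightarrow> real"

definition pbracket :: "'a::real_normed_vector bivector_field \<Rightarrow> ('a \<Rightarrow> real) \<Rightarrow> ('a \<Rightarrow> real) \<Rightarrow> 'a \<Rightarrow> real" where
  "pbracket P f g = (\<lambda>a. P a (frechet_derivative f (at a)) (frechet_derivative g (at a)))"

text \<open>Poisson structure on an open set U: P is skew, bilinear on covectors, smooth,
  and satisfies the Jacobi identity (checked on linear coordinate functions, which is
  equivalent to the Jacobi identity of the induced bracket on all smooth functions).\<close>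
definition poisson_on :: "'a::euclidean_space set \<Rightarrow> 'a bivector_field \<Rightarrow> bool" where
  "poisson_on U P \<longleftrightarrow> open U
    \<and> (\<forall>a\<in>U. \<forall>\<xi> \<eta>. linear \<xi> \<longrightarrow> linear \<eta> \<longrightarrow> P a \<xi> \<eta> = - P a \<eta> \<xi>)
    \<and> (\<forall>a\<in>U. \<forall>\<xi>1 \<xi>2 \<eta> c. linear \<xi>1 \<longrightarrow> linear \<xi>2 \<longrightarrow> linear \<eta> \<longrightarrow>
          P a (\<lambda>v. \<xi>1 v + c * \<xi>2 v) \<eta> = P a \<xi>1 \<eta> + c * P a \<xi>2 \<eta>)
    \<and> (\<forall>\<xi> \<eta>. linear \<xi> \<longrightarrow> linear \<eta> \<longrightarrow> smooth_on U (\<lambda>a. P a \<xi> \<eta>))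
    \<and> (\<forall>a\<in>U. \<forall>\<xi>1 \<xi>2 \<xi>3. linear \<xi>1 \<longrightarrow> linear \<xi>2 \<longrightarrow> linear \<xi>3 \<longrightarrow>
          pbracket P \<xi>1 (pbracket P \<xi>2 \<xi>3) a + pbracket P \<xi>2 (pbracket P \<xi>3 \<xi>1) a
          + pbracket P \<xi>3 (pbracket P \<xi>1 \<xi>2) a = 0)"

definition quadratic_bivector :: "'a::euclidean_space bivector_field \<Rightarrow> bool" where
  "quadratic_bivector P \<longleftrightarrow>
     (\<forall>\<xi> \<eta>. linear \<xi> \<longrightarrow> linear \<eta> \<longrightarrow>
        (\<exists>B::'a \<Rightarrow> 'a \<Rightarrow> real. bilinear B \<and> (\<forall>a. P a \<xi> \<eta> = B a a)))"

definition prod_bivector :: "'a::euclidean_space bivector_field \<Rightarrow> 'b::euclidean_space bivector_field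
    \<Rightarrow> ('a \<times> 'b) bivector_field" where
  "prod_bivector P Q = (\<lambda>(a, b) \<xi> \<eta>.
      P a (\<lambda>x. \<xi> (x, 0)) (\<lambda>x. \<eta> (x, 0)) + Q b (\<lambda>y. \<xi> (0, y)) (\<lambda>y. \<eta> (0, y)))"

definition poisson_map :: "'a::euclidean_space set \<Rightarrow> 'a bivector_field \<Rightarrow>
    'b::euclidean_space set \<Rightarrow> 'b bivector_field \<Rightarrow> ('a \<Rightarrow> 'b) \<Rightarrow> bool" where
  "poisson_map U P V Q \<phi> \<longleftrightarrow> \<phi> ` U \<subseteq> V \<and> smooth_on U \<phi>
     \<and> (\<forall>p\<in>U. \<forall>\<xi> \<eta>. linear \<xi> \<longrightarrow> linear \<eta> \<longrightarrow>
          Q (\<phi> p) \<xi> \<eta> = P p (\<xi> \<circ> frechet_derivative \<phi> (at p)) (\<eta> \<circ> frechet_derivative \<phi> (at p)))"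

definition lie_group_on :: "'a::euclidean_space set \<Rightarrow> ('a \<Rightarrow> 'a \<Rightarrow> 'a) \<Rightarrow> 'a \<Rightarrow> bool" where
  "lie_group_on G m e \<longleftrightarrow> open G \<and> e \<in> G
     \<and> (\<forall>g\<in>G. \<forall>h\<in>G. m g h \<in> G)
     \<and> (\<forall>g\<in>G. \<forall>h\<in>G. \<forall>k\<in>G. m (m g h) k = m g (m h k))
     \<and> (\<forall>g\<in>G. m e g = g \<and> m g e = g)
     \<and> smooth_on (G \<times> G) (\<lambda>(g, h). m g h)
     \<and> (\<exists>inv. (\<forall>g\<in>G. inv g \<in> G \<and> m g (inv g) = e \<and> m (inv g) g = e) \<and> smooth_on G inv)"

definition poisson_lie_group_on :: "'a::euclidean_space set \<Rightarrow> ('a \<Rightarrow> 'a \<Rightarrow> 'a) \<Rightarrow> 'a \<Rightarrow>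
    'a bivector_field \<Rightarrow> bool" where
  "poisson_lie_group_on G m e P \<longleftrightarrow> lie_group_on G m e \<and> poisson_on G P
     \<and> poisson_map (G \<times> G) (prod_bivector P P) G P (\<lambda>(g, h). m g h)"

definition tangent_lie_bracket :: "('a::real_normed_vector \<Rightarrow> 'a \<Rightarrow> 'a) \<Rightarrow> 'a \<Rightarrow> 'a \<Rightarrow> 'a \<Rightarrow> 'a" where
  "tangent_lie_bracket m e x y =
     vector_derivative (\<lambda>s. vector_derivative (\<lambda>t. m (e + s *\<^sub>R x) (e + t *\<^sub>R y)) (at 0)) (at 0)
   - vector_derivative (\<lambda>s. vector_derivative (\<lambda>t. m (e + s *\<^sub>R y) (e + t *\<^sub>R x)) (at 0)) (at 0)"

text \<open>Cocommutator of the tangent Lie bialgebra: linearization of the Poisson tensor at e,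
  as an element of g \<wedge> g viewed as a skew form on covectors.\<close>
definition tangent_cocommutator :: "'a::real_normed_vector bivector_field \<Rightarrow> 'a \<Rightarrow> 'a \<Rightarrow>
    ('a \<Rightarrow> real) \<Rightarrow> ('a \<Rightarrow> real) \<Rightarrow> real" where
  "tangent_cocommutator P e x \<xi> \<eta> = frechet_derivative (\<lambda>a. P a \<xi> \<eta>) (at e) x"

definition units_of_alg :: "('a \<Rightarrow> 'a \<Rightarrow> 'a) \<Rightarrow> 'a \<Rightarrow> 'a set" where
  "units_of_alg m u = {a. \<exists>b. m a b = u \<and> m b a = u}"

text \<open>The dual map delta : Symm(A \<otimes> A) \<rightarrow> A \<wedge> A of a quadratic bracket, evaluated on the
  symmetric tensor x \<otimes> y + y \<otimes> x (elements of A \<wedge> A viewed as skew forms on covectors).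
  With the quadratic function {xi,eta}(a) = <delta*(xi \<wedge> eta), a \<otimes> a>, polarization gives
  <delta*(xi \<wedge> eta), x \<otimes> y + y \<otimes> x> = {xi,eta}(x+y) - {xi,eta}(x) - {xi,eta}(y).\<close>
definition delta_sym :: "'a::real_normed_vector bivector_field \<Rightarrow> 'a \<Rightarrow> 'a \<Rightarrow>
    ('a \<Rightarrow> real) \<Rightarrow> ('a \<Rightarrow> real) \<Rightarrow> real" where
  "delta_sym P x y \<xi> \<eta> = P (x + y) \<xi> \<eta> - P x \<xi> \<eta> - P y \<xi> \<eta>"

end

theory Submission
  imports Defs
begin


lemma quot_lim:
  fixes f :: "'a::real_normed_vector \<Rightarrow> 'b::real_normed_vector"
  assumes "(f has_derivative D) (at x)"
  shows "((\<lambda>t::real. (f (x + t *\<^sub>R v) - f x) /\<^sub>R t) \<longlongrightarrow> D v) (at 0)"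
proof -
  have d: "((\<lambda>t. f (x + t *\<^sub>R v)) has_derivative (\<lambda>t. D (t *\<^sub>R v))) (at 0)"
  proof -
    have "((\<lambda>t::real. x + t *\<^sub>R v) has_derivative (\<lambda>t. t *\<^sub>R v)) (at 0)"
      by (auto intro!: derivative_eq_intros)
    from has_derivative_compose[OF this, of f D] show ?thesis using assms by simp
  qed
  have bl: "bounded_linear D" using assms has_derivative_bounded_linear by blast
  have "D (t *\<^sub>R v) = t *\<^sub>R D v" for t using bl by (simp add: linear_simps)
  with d have L0: "((\<lambda>h. norm (f (x + h *\<^sub>R v) - f x - h *\<^sub>R D v) / norm h) \<longlongrightarrow> 0) (at 0)"
    unfolding has_derivative_at by simp
  moreover have eq: "norm (f (x + h *\<^sub>R v) - f x - h *\<^sub>R D v) / norm h = norm ((f (x + h *\<^sub>R v) - f x) /\<^sub>R h - D v)"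
    if "h \<noteq> 0" for h :: real
  proof -
    have "(f (x + h *\<^sub>R v) - f x) /\<^sub>R h - D v = (f (x + h *\<^sub>R v) - f x - h *\<^sub>R D v) /\<^sub>R h"
      using that by (simp add: algebra_simps)
    then show ?thesis by (simp add: divide_inverse_commute)
  qed
  have "((\<lambda>h. norm ((f (x + h *\<^sub>R v) - f x) /\<^sub>R h - D v)) \<longlongrightarrow> 0) (at (0::real))"
  proof (rule Lim_transform_eventually)
    show "\<forall>\<^sub>F h in at 0. norm (f (x + h *\<^sub>R v) - f x - h *\<^sub>R D v) / norm h = norm ((f (x + h *\<^sub>R v) - f x) /\<^sub>R h - D v)"
      using eq by (auto simp: eventually_at_filter)
  qed (rule L0)
  then show ?thesis
    using Lim_null tendsto_norm_zero_iff by blast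
qed

lemma ev_in_open:
  fixes x :: "'a::real_normed_vector"
  assumes "open S" "x \<in> S"
  shows "eventually (\<lambda>t::real. x + t *\<^sub>R v \<in> S) (at 0)"
proof -
  have "((\<lambda>t::real. x + t *\<^sub>R v) \<longlongrightarrow> x + 0 *\<^sub>R v) (at 0)"
    by (intro tendsto_intros)
  then have "((\<lambda>t::real. x + t *\<^sub>R v) \<longlongrightarrow> x) (at 0)" by simp
  then show ?thesis using assms topological_tendstoD by blast
qed

lemma smooth_family:
  fixes F :: "('a::real_normed_vector \<Rightarrow> 'b::real_normed_vector) set"
  assumes S: "open S"
    and fam: "\<And>f. f \<in> F \<Longrightarrow> \<exists>D. (\<forall>x\<in>S. (f has_derivative D x) (at x)) \<and> (\<forall>v. (\<lambda>x. D x v) \<in> F)"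
    and f: "f \<in> F"
  shows "smooth_on S f"
proof -
  have lim: "((\<lambda>t::real. (g (x + t *\<^sub>R v) - g x) /\<^sub>R t) \<longlongrightarrow> D x v) (at 0)"
    if "\<forall>y\<in>S. g y = h y" "x \<in> S" "\<forall>x\<in>S. (h has_derivative D x) (at x)" for g h D x v
  proof -
    have "((\<lambda>t::real. (h (x + t *\<^sub>R v) - h x) /\<^sub>R t) \<longlongrightarrow> D x v) (at 0)"
      using quot_lim that by blast
    moreover have "eventually (\<lambda>t::real. (h (x + t *\<^sub>R v) - h x) /\<^sub>R t = (g (x + t *\<^sub>R v) - g x) /\<^sub>R t) (at 0)"
      using ev_in_open[OF S \<open>x \<in> S\<close>, of v] by eventually_elim (use that in auto)
    ultimately show ?thesis using Lim_transform_eventually by fast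
  qed
  have main: "\<exists>h\<in>F. \<forall>x\<in>S. iter_dd vs f x = h x" for vs
  proof (induction vs)
    case Nil then show ?case using f by auto
  next
    case (Cons v vs)
    then obtain h where h: "h \<in> F" "\<forall>x\<in>S. iter_dd vs f x = h x" by blast
    obtain D where D: "\<forall>x\<in>S. (h has_derivative D x) (at x)" "\<forall>v. (\<lambda>x. D x v) \<in> F"
      using fam[OF h(1)] by blast
    have "iter_dd (v # vs) f x = D x v" if "x \<in> S" for x
      using tendsto_Lim[OF _ lim[OF h(2) that D(1)]] by simp
    then show ?case using D(2) by (intro bexI[of _ "\<lambda>x. D x v"]) auto
  qed
  show ?thesis unfolding smooth_on_def
  proof (intro conjI allI ballI)
    show "open S" by fact
  next
    fix vs
    obtain h where h: "h \<in> F" "\<forall>x\<in>S. iter_dd vs f x = h x" using main by blast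
    obtain D where D: "\<forall>x\<in>S. (h has_derivative D x) (at x)"
      using fam[OF h(1)] by blast
    have "continuous_on S h"
      using D has_derivative_continuous continuous_at_imp_continuous_on by blast
    then show "continuous_on S (iter_dd vs f)"
      using continuous_on_cong h(2) by (metis (mono_tags, lifting))
  next
    fix vs v x assume x: "x \<in> S"
    obtain h where h: "h \<in> F" "\<forall>x\<in>S. iter_dd vs f x = h x" using main by blast
    obtain D where D: "\<forall>x\<in>S. (h has_derivative D x) (at x)" "\<forall>v. (\<lambda>x. D x v) \<in> F"
      using fam[OF h(1)] by blast
    have L: "((\<lambda>t::real. (iter_dd vs f (x + t *\<^sub>R v) - iter_dd vs f x) /\<^sub>R t) \<longlongrightarrow> D x v) (at 0)"
      using lim[OF h(2) x D(1)] .
    then have "iter_dd (v # vs) f x = D x v" using tendsto_Lim[OF _ L] by simp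
    then show "((\<lambda>t::real. (iter_dd vs f (x + t *\<^sub>R v) - iter_dd vs f x) /\<^sub>R t) \<longlongrightarrow> iter_dd (v # vs) f x) (at 0)"
      using L by simp
  qed
qed

lemma smooth_on_subset:
  assumes "smooth_on UNIV f" "open S"
  shows "smooth_on S f"
  using assms unfolding smooth_on_def by (auto intro: continuous_on_subset)



definition invr :: "('a \<Rightarrow> 'a \<Rightarrow> 'a) \<Rightarrow> 'a \<Rightarrow> 'a \<Rightarrow> 'a" where
  "invr m e a = (SOME b. m a b = e \<and> m b a = e)"

lemma deriv_from_sq:
  fixes f :: "'a::real_normed_vector \<Rightarrow> 'b::real_normed_vector"
  assumes "bounded_linear D" "d0 > 0" "M \<ge> 0"
    and "\<And>y. norm (y - a) < d0 \<Longrightarrow> norm (f y - f a - D (y - a)) \<le> M * (norm (y - a))\<^sup>2"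
  shows "(f has_derivative D) (at a)"
  unfolding has_derivative_at_alt
proof (intro conjI allI impI)
  fix e :: real assume e: "e > 0"
  define d where "d = min d0 (e / (M + 1))"
  have d: "d > 0" using e assms by (simp add: d_def)
  have "norm (f y - f a - D (y - a)) \<le> e * norm (y - a)" if "norm (y - a) < d" for y
  proof -
    have "norm (f y - f a - D (y - a)) \<le> M * (norm (y - a))\<^sup>2"
      using assms(4) that d_def by auto
    also have "\<dots> = (M * norm (y - a)) * norm (y - a)" by (simp add: power2_eq_square)
    also have "\<dots> \<le> e * norm (y - a)"
    proof (rule mult_right_mono)
      have "norm (y - a) < e / (M + 1)" using that d_def by auto
      then have "(M + 1) * norm (y - a) \<le> e" using assms(3) by (simp add: field_simps)
      then show "M * norm (y - a) \<le> e" by (smt (verit) mult_right_mono norm_ge_zero distrib_right mult_1)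
    qed simp
    finally show ?thesis .
  qed
  then show "\<exists>d>0. \<forall>y. norm (y - a) < d \<longrightarrow> norm (f y - f a - D (y - a)) \<le> e * norm (y - a)"
    using d by blast
qed (fact)

inductive_set Wf :: "('a::euclidean_space \<Rightarrow> 'a \<Rightarrow> 'a) \<Rightarrow> 'a \<Rightarrow> ('a \<Rightarrow> 'a) set" for m e where
  Wc: "(\<lambda>a. c) \<in> Wf m e"
| Wi: "invr m e \<in> Wf m e"
| Wm: "f \<in> Wf m e \<Longrightarrow> g \<in> Wf m e \<Longrightarrow> (\<lambda>a. m (f a) (g a)) \<in> Wf m e"
| Wp: "f \<in> Wf m e \<Longrightarrow> g \<in> Wf m e \<Longrightarrow> (\<lambda>a. f a + g a) \<in> Wf m e"

locale alg =
  fixes mult :: "'a::euclidean_space \<Rightarrow> 'a \<Rightarrow> 'a" and u :: 'a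
  assumes bil: "bilinear mult"
    and assoc: "\<forall>a b c. mult (mult a b) c = mult a (mult b c)"
    and unit: "\<forall>a. mult u a = a \<and> mult a u = a"
begin

sublocale bb: bounded_bilinear mult
  using bil bilinear_conv_bounded_bilinear by blast

abbreviation "G \<equiv> units_of_alg mult u"
abbreviation "iv \<equiv> invr mult u"

lemma iv: "a \<in> G \<Longrightarrow> mult a (iv a) = u \<and> mult (iv a) a = u"
  unfolding units_of_alg_def invr_def by (rule someI_ex) simp

lemma iv_G: "a \<in> G \<Longrightarrow> iv a \<in> G"
  using iv unfolding units_of_alg_def by blast

lemma u_G: "u \<in> G" using unit unfolding units_of_alg_def by blast

lemma mult_G: "a \<in> G \<Longrightarrow> b \<in> G \<Longrightarrow> mult a b \<in> G"
proof -
  assume a: "a \<in> G" and b: "b \<in> G"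
  have "mult (mult a b) (mult (iv b) (iv a)) = u"
    using iv[OF a] iv[OF b] assoc unit by metis
  moreover have "mult (mult (iv b) (iv a)) (mult a b) = u"
    using iv[OF a] iv[OF b] assoc unit by metis
  ultimately show ?thesis unfolding units_of_alg_def by blast
qed

lemma inj_imp_G:
  assumes "\<And>x. mult c x = 0 \<Longrightarrow> x = 0"
  shows "c \<in> G"
proof -
  have lin: "linear (mult c)" using bb.bounded_linear_right bounded_linear.linear by blast
  have "inj (mult c)"
    by (rule injI) (metis assms bb.diff_right eq_iff_diff_eq_0)
  then have "surj (mult c)" using linear_injective_imp_surjective lin by blast
  then obtain d where d: "mult c d = u" by (metis surjD)
  have "mult c (mult d c) = mult c u"
    using d assoc unit by metis
  then have "mult d c = u" using \<open>inj (mult c)\<close> by (simp add: inj_eq)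
  with d show ?thesis unfolding units_of_alg_def by blast
qed

lemma K: "\<exists>K>0. \<forall>a b. norm (mult a b) \<le> K * norm a * norm b"
  using bilinear_bounded_pos[OF bil] .

lemma ivx: "a \<in> G \<Longrightarrow> mult (iv a) (mult a x) = x"
  using iv assoc unit by metis

lemma near_G:
  assumes a: "a \<in> G" and K: "K > 0" "\<forall>a b. norm (mult a b) \<le> K * norm a * norm b"
  shows "norm (y - a) < 1 / (K * K * (norm (iv a) + 1)) \<Longrightarrow> y \<in> G"
proof -
  define b where "b = iv a"
  define nb where "nb = norm b + 1"
  have nb: "nb > 0" "norm b \<le> nb" unfolding nb_def by (auto intro: add_nonneg_pos)
  assume y: "norm (y - a) < 1 / (K * K * (norm (iv a) + 1))"
  have D: "K * K * nb > 0" using K nb by simp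
  have "K * K * nb * norm (y - a) < 1"
    using y D unfolding nb_def b_def by (simp add: pos_less_divide_eq mult.commute)
  then have y': "K * nb * (K * norm (y - a)) < 1"
    by (simp add: algebra_simps)
  show "y \<in> G"
  proof (rule inj_imp_G, rule ccontr)
    fix x assume yx: "mult y x = 0" and x: "x \<noteq> 0"
    have ax: "mult a x = - mult (y - a) x"
      using yx by (simp add: bb.diff_left)
    have "norm x = norm (mult b (mult a x))" using ivx[OF a] b_def by simp
    also have "\<dots> \<le> K * norm b * norm (mult a x)" using K by blast
    also have "\<dots> \<le> K * nb * norm (mult a x)"
      using K nb by (intro mult_right_mono mult_left_mono) auto
    also have "norm (mult a x) \<le> K * norm (y - a) * norm x" using ax K by simp
    then have "K * nb * norm (mult a x) \<le> K * nb * (K * norm (y - a) * norm x)"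
      using K nb by (intro mult_left_mono) auto
    also have "\<dots> = (K * nb * (K * norm (y - a))) * norm x" by (simp add: algebra_simps)
    also have "\<dots> < 1 * norm x" using y' x by (intro mult_strict_right_mono) auto
    finally show False by simp
  qed
qed

lemma open_G: "open G"
proof -
  obtain K where K: "K > 0" "\<forall>a b. norm (mult a b) \<le> K * norm a * norm b" using K by blast
  show ?thesis unfolding open_dist
  proof (intro ballI)
    fix a assume a: "a \<in> G"
    have "1 / (K * K * (norm (iv a) + 1)) > 0" using K
      by (simp add: add_nonneg_pos)
    moreover have "\<forall>y. dist y a < 1 / (K * K * (norm (iv a) + 1)) \<longrightarrow> y \<in> G"
      using near_G[OF a K] by (simp add: dist_norm)
    ultimately show "\<exists>e>0. \<forall>y. dist y a < e \<longrightarrow> y \<in> G" by blast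
  qed
qed

lemma iv_deriv:
  assumes a: "a \<in> G"
  shows "(iv has_derivative (\<lambda>v. mult (mult (iv a) (- v)) (iv a))) (at a)"
proof -
  obtain K where K: "K > 0" "\<forall>a b. norm (mult a b) \<le> K * norm a * norm b" using K by blast
  define b where "b = iv a"
  define nb where "nb = norm b + 1"
  have nb: "nb > 0" "norm b \<le> nb" unfolding nb_def by (auto intro: add_nonneg_pos)
  define d0 where "d0 = min (1 / (K * K * (norm (iv a) + 1))) (1 / (2 * K * K * nb))"
  have d0: "d0 > 0" unfolding d0_def using K nb by (simp add: add_nonneg_pos)
  have bl: "bounded_linear (\<lambda>v. mult (mult (iv a) (- v)) (iv a))"
    by (intro bounded_linear_compose[OF bb.bounded_linear_left]
        bounded_linear_compose[OF bb.bounded_linear_right] bounded_linear_minus bounded_linear_ident)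
  show ?thesis
  proof (rule deriv_from_sq[OF bl d0])
    show "0 \<le> 2 * K^4 * nb^3" using K nb by simp
  next
    fix y assume y: "norm (y - a) < d0"
    define h where "h = y - a"
    define c where "c = iv y"
    have yG: "y \<in> G" using near_G[OF a K] y d0_def by simp
    have hb: "K * K * norm h * nb \<le> 1 / 2"
    proof -
      have "norm h < 1 / (2 * K * K * nb)" using y d0_def h_def by simp
      then have "(2 * K * K * nb) * norm h < 1" using K nb by (simp add: pos_less_divide_eq mult.commute)
      then show ?thesis by (simp add: algebra_simps)
    qed
    have cb: "c - b = - mult (mult c h) b"
    proof -
      have "mult c a = u - mult c h" using iv[OF yG] by (simp add: h_def c_def bb.diff_right)
      then have "mult (mult c a) b = b - mult (mult c h) b" by (simp add: bb.diff_left unit)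
      moreover have "mult (mult c a) b = c" using iv[OF a] assoc unit b_def by metis
      ultimately have e: "c = b - mult (mult c h) b" by simp
      show ?thesis by (subst e) simp
    qed
    have nc: "norm c \<le> 2 * nb"
    proof -
      have "c = b + (c - b)" by simp
      then have "c = b - mult (mult c h) b" unfolding cb by simp
      then have "norm c = norm (b - mult (mult c h) b)" by simp
      also have "\<dots> \<le> norm b + norm (mult (mult c h) b)" by (rule norm_triangle_ineq4)
      also have "norm (mult (mult c h) b) \<le> K * norm (mult c h) * norm b" using K by blast
      also have "\<dots> \<le> K * (K * norm c * norm h) * nb"
        using K nb by (intro mult_mono mult_left_mono) auto
      also have "\<dots> = norm c * (K * K * norm h * nb)" by (simp add: algebra_simps)
      also have "\<dots> \<le> norm c * (1/2)" using hb by (intro mult_left_mono) auto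
      finally show ?thesis using nb by linarith
    qed
    have R: "c - b - mult (mult b (- h)) b = mult (mult (mult (mult c h) b) h) b"
    proof -
      have "c - b - mult (mult b (- h)) b = mult (mult (b - c) h) b"
        by (simp add: bb.diff_left bb.minus_right bb.minus_left cb)
      moreover have "b - c = mult (mult c h) b" using arg_cong[OF cb, of uminus] by simp
      ultimately show ?thesis by simp
    qed
    have "norm (mult (mult (mult (mult c h) b) h) b) \<le> K * (K * (K * (K * norm c * norm h) * nb) * norm h) * nb"
    proof -
      have "norm (mult (mult (mult (mult c h) b) h) b) \<le> K * norm (mult (mult (mult c h) b) h) * nb"
        using K(2) nb K(1) by (meson mult_left_mono order_trans less_imp_le mult_nonneg_nonneg norm_ge_zero)
      also have "\<dots> \<le> K * (K * norm (mult (mult c h) b) * norm h) * nb"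
        using K nb by (intro mult_right_mono mult_left_mono) auto
      also have "\<dots> \<le> K * (K * (K * norm (mult c h) * nb) * norm h) * nb"
      proof -
        have "norm (mult (mult c h) b) \<le> K * norm (mult c h) * nb"
          using K(2)[rule_format, of "mult c h" b] nb K(1)
          by (meson mult_left_mono order_trans less_imp_le mult_nonneg_nonneg norm_ge_zero)
        then show ?thesis using K nb by (intro mult_right_mono mult_left_mono) auto
      qed
      also have "\<dots> \<le> K * (K * (K * (K * norm c * norm h) * nb) * norm h) * nb"
        using K nb K(2)[rule_format, of c h] by (intro mult_right_mono mult_left_mono) auto
      finally show ?thesis .
    qed
    also have "\<dots> = K^4 * norm c * nb^2 * (norm h)^2" by (simp add: power2_eq_square power4_eq_xxxx)
    also have "\<dots> \<le> K^4 * (2 * nb) * nb^2 * (norm h)^2"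
      using nc K by (intro mult_right_mono) auto
    also have "\<dots> = 2 * K^4 * nb^3 * (norm h)^2" by (simp add: power2_eq_square power3_eq_cube)
    finally show "norm (iv y - iv a - mult (mult (iv a) (- (y - a))) (iv a)) \<le> 2 * K^4 * nb^3 * (norm (y - a))\<^sup>2"
      using R by (simp add: c_def b_def h_def)
  qed
qed

lemma W_deriv:
  assumes "f \<in> Wf mult u"
  shows "\<exists>D. (\<forall>x\<in>G. (f has_derivative D x) (at x)) \<and> (\<forall>v. (\<lambda>x. D x v) \<in> Wf mult u)"
  using assms
proof induction
  case (Wc c)
  show ?case by (intro exI[of _ "\<lambda>x v. 0"]) (auto intro: Wf.Wc)
next
  case Wi
  show ?case
  proof (intro exI[of _ "\<lambda>x v. mult (mult (iv x) (- v)) (iv x)"] conjI ballI allI)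
    show "(iv has_derivative (\<lambda>v. mult (mult (iv x) (- v)) (iv x))) (at x)" if "x \<in> G" for x
      using iv_deriv[OF that] .
    show "(\<lambda>x. mult (mult (iv x) (- v)) (iv x)) \<in> Wf mult u" for v
      using Wf.Wm[OF Wf.Wm[OF Wf.Wi Wf.Wc[of "- v"]] Wf.Wi] by simp
  qed
next
  case (Wm f g)
  then obtain Df Dg where Df: "\<forall>x\<in>G. (f has_derivative Df x) (at x)" "\<forall>v. (\<lambda>x. Df x v) \<in> Wf mult u"
    and Dg: "\<forall>x\<in>G. (g has_derivative Dg x) (at x)" "\<forall>v. (\<lambda>x. Dg x v) \<in> Wf mult u" by blast
  show ?case
  proof (intro exI[of _ "\<lambda>x v. mult (f x) (Dg x v) + mult (Df x v) (g x)"] conjI ballI allI)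
    show "((\<lambda>a. mult (f a) (g a)) has_derivative (\<lambda>v. mult (f x) (Dg x v) + mult (Df x v) (g x))) (at x)"
      if "x \<in> G" for x
      using bb.FDERIV[OF Df(1)[rule_format, OF that] Dg(1)[rule_format, OF that]] .
    show "(\<lambda>x. mult (f x) (Dg x v) + mult (Df x v) (g x)) \<in> Wf mult u" for v
      using Wf.Wp[OF Wf.Wm[OF Wm(1) Dg(2)[rule_format]] Wf.Wm[OF Df(2)[rule_format] Wm(2)]] .
  qed
next
  case (Wp f g)
  then obtain Df Dg where Df: "\<forall>x\<in>G. (f has_derivative Df x) (at x)" "\<forall>v. (\<lambda>x. Df x v) \<in> Wf mult u"
    and Dg: "\<forall>x\<in>G. (g has_derivative Dg x) (at x)" "\<forall>v. (\<lambda>x. Dg x v) \<in> Wf mult u" by blast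
  show ?case
  proof (intro exI[of _ "\<lambda>x v. Df x v + Dg x v"] conjI ballI allI)
    show "((\<lambda>a. f a + g a) has_derivative (\<lambda>v. Df x v + Dg x v)) (at x)" if "x \<in> G" for x
      using has_derivative_add[OF Df(1)[rule_format, OF that] Dg(1)[rule_format, OF that]] .
    show "(\<lambda>x. Df x v + Dg x v) \<in> Wf mult u" for v
      using Wf.Wp[OF Df(2)[rule_format] Dg(2)[rule_format]] .
  qed
qed

lemma smooth_iv: "smooth_on G iv"
  by (rule smooth_family[OF open_G W_deriv Wf.Wi])

end


lemma (in alg) bracket_part: "vector_derivative (\<lambda>s. vector_derivative (\<lambda>t. mult (u + s *\<^sub>R x) (u + t *\<^sub>R y)) (at 0)) (at 0) = mult x y"
proof -
  have inner: "vector_derivative (\<lambda>t. mult (u + s *\<^sub>R x) (u + t *\<^sub>R y)) (at 0) = y + s *\<^sub>R mult x y" for s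
  proof -
    have e: "(\<lambda>t. mult (u + s *\<^sub>R x) (u + t *\<^sub>R y)) = (\<lambda>t. mult (u + s *\<^sub>R x) u + t *\<^sub>R mult (u + s *\<^sub>R x) y)"
      by (simp add: bb.add_right bb.scaleR_right)
    have "((\<lambda>t. mult (u + s *\<^sub>R x) u + t *\<^sub>R mult (u + s *\<^sub>R x) y) has_vector_derivative mult (u + s *\<^sub>R x) y) (at 0)"
      by (auto intro!: derivative_eq_intros)
    then have "vector_derivative (\<lambda>t. mult (u + s *\<^sub>R x) (u + t *\<^sub>R y)) (at 0) = mult (u + s *\<^sub>R x) y"
      unfolding e by (rule vector_derivative_at)
    also have "\<dots> = y + s *\<^sub>R mult x y" using unit by (simp add: bb.add_left bb.scaleR_left)
    finally show ?thesis .
  qed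
  have "((\<lambda>s. y + s *\<^sub>R mult x y) has_vector_derivative mult x y) (at 0)"
    by (auto intro!: derivative_eq_intros)
  then show ?thesis unfolding inner by (rule vector_derivative_at)
qed

theorem theorem5:
  fixes mult :: "'a::euclidean_space \<Rightarrow> 'a \<Rightarrow> 'a"
    and u :: 'a
    and P :: "'a bivector_field"
  assumes bil: "bilinear mult"
    and assoc: "\<forall>a b c. mult (mult a b) c = mult a (mult b c)"
    and unit: "\<forall>a. mult u a = a \<and> mult a u = a"
    and poisson: "poisson_on UNIV P"
    and quad: "quadratic_bivector P"
    and compat: "poisson_map (UNIV \<times> UNIV) (prod_bivector P P) UNIV P (\<lambda>(a, b). mult a b)"
  shows "poisson_lie_group_on (units_of_alg mult u) mult u P
       \<and> (\<forall>x y. tangent_lie_bracket mult u x y = mult x y - mult y x)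
       \<and> (\<forall>x \<xi> \<eta>. linear \<xi> \<longrightarrow> linear \<eta> \<longrightarrow>
            tangent_cocommutator P u x \<xi> \<eta> = delta_sym P x u \<xi> \<eta>)"
proof -
  interpret alg mult u using bil assoc unit by unfold_locales
  have oGG: "open (G \<times> G)" using open_G by (simp add: open_Times)
  have smU: "smooth_on UNIV (\<lambda>(g, h). mult g h)"
    using compat unfolding poisson_map_def by simp
  have sm: "smooth_on (G \<times> G) (\<lambda>(g, h). mult g h)"
    by (rule smooth_on_subset[OF smU oGG])
  have lg: "lie_group_on G mult u"
    unfolding lie_group_on_def
  proof (intro conjI)
    show "\<exists>inv. (\<forall>g\<in>G. inv g \<in> G \<and> mult g (inv g) = u \<and> mult (inv g) g = u) \<and> smooth_on G inv"
      using iv iv_G smooth_iv by (intro exI[of _ iv]) blast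
    show "\<forall>g\<in>G. \<forall>h\<in>G. mult g h \<in> G" using mult_G by blast
    show "\<forall>g\<in>G. \<forall>h\<in>G. \<forall>k\<in>G. mult (mult g h) k = mult g (mult h k)" using assoc by blast
    show "\<forall>g\<in>G. mult u g = g \<and> mult g u = g" using unit by blast
  qed (rule open_G u_G sm)+
  have po: "poisson_on G P"
  proof -
    have "\<forall>\<xi> \<eta>. linear \<xi> \<longrightarrow> linear \<eta> \<longrightarrow> smooth_on UNIV (\<lambda>a. P a \<xi> \<eta>)"
      using poisson unfolding poisson_on_def by blast
    then have "\<forall>\<xi> \<eta>. linear \<xi> \<longrightarrow> linear \<eta> \<longrightarrow> smooth_on G (\<lambda>a. P a \<xi> \<eta>)"
      using smooth_on_subset[OF _ open_G] by blast
    then show ?thesis using poisson open_G unfolding poisson_on_def by blast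
  qed
  have pm: "poisson_map (G \<times> G) (prod_bivector P P) G P (\<lambda>(g, h). mult g h)"
    unfolding poisson_map_def
  proof (intro conjI)
    show "(\<lambda>(g, h). mult g h) ` (G \<times> G) \<subseteq> G" using mult_G by auto
    show "smooth_on (G \<times> G) (\<lambda>(g, h). mult g h)" by (rule sm)
    show "\<forall>p\<in>G \<times> G. \<forall>\<xi> \<eta>. linear \<xi> \<longrightarrow> linear \<eta> \<longrightarrow>
        P ((\<lambda>(g, h). mult g h) p) \<xi> \<eta> = prod_bivector P P p (\<xi> \<circ> frechet_derivative (\<lambda>(g, h). mult g h) (at p))
          (\<eta> \<circ> frechet_derivative (\<lambda>(g, h). mult g h) (at p))"
      using compat unfolding poisson_map_def by blast
  qed
  have br: "tangent_lie_bracket mult u x y = mult x y - mult y x" for x y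
    unfolding tangent_lie_bracket_def bracket_part by simp
  have co: "tangent_cocommutator P u x \<xi> \<eta> = delta_sym P x u \<xi> \<eta>"
    if lxe: "linear \<xi>" "linear \<eta>" for x \<xi> \<eta>
  proof -
    obtain B :: "'a \<Rightarrow> 'a \<Rightarrow> real" where B: "bilinear B" "\<forall>a. P a \<xi> \<eta> = B a a"
      using quad lxe unfolding quadratic_bivector_def by blast
    interpret B: bounded_bilinear B using B(1) bilinear_conv_bounded_bilinear by blast
    have e: "(\<lambda>a. P a \<xi> \<eta>) = (\<lambda>a. B a a)" using B(2) by simp
    have "((\<lambda>a. B a a) has_derivative (\<lambda>h. B u h + B h u)) (at u)"
      using B.FDERIV[OF has_derivative_ident has_derivative_ident] by simp
    then have "frechet_derivative (\<lambda>a. P a \<xi> \<eta>) (at u) = (\<lambda>h. B u h + B h u)"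
      unfolding e using frechet_derivative_at by metis
    then show ?thesis
      unfolding tangent_cocommutator_def delta_sym_def using B(2)
      by (simp add: B.add_left B.add_right)
  qed
  show ?thesis
    unfolding poisson_lie_group_on_def using lg po pm br co by (intro conjI allI impI) auto
qed



end
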